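(* Let $(\mathcal H,\mathfrak A_0)$ be a Hilbert quasi *-algebra satisfying condition (P), and assume that $\mathcal H^+_{wb}:=\{\xi\in\mathcal H_b:\langle\xi x,x\rangle\ge0\ \forall x\in\mathfrak A_0\}\subseteq\mathcal H^+$. Then $\mathcal H^+=\mathcal H^+_w$.
   Context: A Hilbert algebra is a *-algebra $\mathfrak A_0$ with an inner product $\langle\cdot,\cdot\rangle$ such that (i) for each $x$, $y\mapsto xy$ is continuous for the inner product norm; (ii) $\langle xy,z\rangle=\langle y,x^*z\rangle$ for all $x,y,z$; (iii) $\langle x,y\rangle=\langle y^*,x^*\rangle$ for all $x,y$; (iv) the linear span of $\{xy:x,y\in\mathfrak A_0\}$ is dense in $\mathfrak A_0$. Let $\mathcal H$ be the Hilbert space completion of $\mathfrak A_0$; the involution extends isometrically to $\mathcal H$, and the products $\xi x$, $x\xi$ for $\xi\in\mathcal H$, $x\in\mathfrak A_0$ are defined by continuity. It is assumed that (A): if $\xi\in\mathcal H$ and $\xi x=0$ for all $x\in\mathfrak A_0$ then $\xi=0$. With these operations $(\mathcal H,\mathfrak A_0)$ is called a Hilbert quasi *-algebra. $\xi\in\mathcal H$ is bounded if $x\mapsto\xi x$ is bounded on $\mathfrak A_0$; $\mathcal H_b$ is the set of bounded elements. $\mathfrak A_0^+=\{\sum_{k=1}^n x_k^*x_k: x_k\in\mathfrak A_0,n\in\mathbb N\}$, $\mathcal H^+$ is its norm closure in $\mathcal H$, and $\mathcal H^+_w=\{\xi\in\mathcal H:\langle\xi x,x\rangle\ge0\ \forall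 x\in\mathfrak A_0\}$. A linear functional $\omega$ on $\mathcal H$ is representable if (L.1) $\omega(x^*x)\ge0$ for all $x\in\mathfrak A_0$; (L.2) $\omega(y^*\xi^*x)=\overline{\omega(x^*\xi y)}$ for all $x,y\in\mathfrak A_0$, $\xi\in\mathcal H$; (L.3) for every $\xi\in\mathcal H$ there is $\gamma_\xi>0$ with $|\omega(\xi^*x)|\le\gamma_\xi\,\omega(x^*x)^{1/2}$ for all $x\in\mathfrak A_0$; $\mathcal R_c(\mathcal H,\mathfrak A_0)$ is the set of continuous representable functionals. Condition (P): if $\xi\in\mathcal H$ and $\omega(x^*\xi x)\ge0$ for every $\omega\in\mathcal R_c(\mathcal H,\mathfrak A_0)$ and every $x\in\mathfrak A_0$, then $\xi\in\mathcal H^+$. *)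

theory Defs
  imports Complex_Main
begin

text \<open>A Hilbert quasi *-algebra (H, A0) is modelled on a type 'h (the Hilbert space H,
  whose additive group structure is the type class structure) together with
  a complex scalar multiplication smul, an inner product ip (linear in the first
  argument), an involution star on H, a multiplication mul (only meaningful when at least
  one argument is in A0), and the subset A0 of 'h.\<close>

definition hnorm :: "('h \<Rightarrow> 'h \<Rightarrow> complex) \<Rightarrow> 'h \<Rightarrow> real" where
  "hnorm ip x = sqrt (Re (ip x x))"

definition cnonneg :: "complex \<Rightarrow> bool" where
  "cnonneg z \<longleftrightarrow> Im z = 0 \<and> 0 \<le> Re z"

definition clinear_map ::
  "(complex \<Rightarrow> 'h::ab_group_add \<Rightarrow> 'h) \<Rightarrow> ('h \<Rightarrow> 'h) \<Rightarrow> bool" where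
  "clinear_map smul f \<longleftrightarrow>
     (\<forall>x y. f (x + y) = f x + f y) \<and> (\<forall>c x. f (smul c x) = smul c (f x))"

definition hbounded_map ::
  "('h \<Rightarrow> 'h \<Rightarrow> complex) \<Rightarrow> ('h \<Rightarrow> 'h) \<Rightarrow> bool" where
  "hbounded_map ip f \<longleftrightarrow> (\<exists>C. \<forall>x. hnorm ip (f x) \<le> C * hnorm ip x)"

definition hilbert_quasi_star_algebra ::
  "(complex \<Rightarrow> 'h::ab_group_add \<Rightarrow> 'h) \<Rightarrow> ('h \<Rightarrow> 'h \<Rightarrow> complex) \<Rightarrow> ('h \<Rightarrow> 'h)
   \<Rightarrow> ('h \<Rightarrow> 'h \<Rightarrow> 'h) \<Rightarrow> 'h set \<Rightarrow> bool" where
  "hilbert_quasi_star_algebra smul ip star mul A0 \<longleftrightarrow>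
     \<comment> \<open>complex vector space\<close>
     (\<forall>c x y. smul c (x + y) = smul c x + smul c y) \<and>
     (\<forall>c d x. smul (c + d) x = smul c x + smul d x) \<and>
     (\<forall>c d x. smul (c * d) x = smul c (smul d x)) \<and>
     (\<forall>x. smul 1 x = x) \<and>
     \<comment> \<open>inner product, linear in the first argument\<close>
     (\<forall>x y z. ip (x + y) z = ip x z + ip y z) \<and>
     (\<forall>c x y. ip (smul c x) y = c * ip x y) \<and>
     (\<forall>x y. ip y x = cnj (ip x y)) \<and>
     (\<forall>x. 0 \<le> Re (ip x x)) \<and>
     (\<forall>x. ip x x = 0 \<longrightarrow> x = 0) \<and>
     \<comment> \<open>completeness (H is a Hilbert space)\<close>
     (\<forall>X :: nat \<Rightarrow> 'h. (\<forall>e>0. \<exists>N. \<forall>m\<ge>N. \<forall>n\<ge>N. hnorm ip (X m - X n) < e) \<longrightarrow>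
        (\<exists>L. \<forall>e>0. \<exists>N. \<forall>n\<ge>N. hnorm ip (X n - L) < e)) \<and>
     \<comment> \<open>A0 is a dense complex subspace closed under product and involution\<close>
     0 \<in> A0 \<and>
     (\<forall>x\<in>A0. \<forall>y\<in>A0. x + y \<in> A0) \<and>
     (\<forall>c. \<forall>x\<in>A0. smul c x \<in> A0) \<and>
     (\<forall>x\<in>A0. \<forall>y\<in>A0. mul x y \<in> A0) \<and>
     (\<forall>x\<in>A0. star x \<in> A0) \<and>
     (\<forall>\<xi> e. e > 0 \<longrightarrow> (\<exists>x\<in>A0. hnorm ip (\<xi> - x) < e)) \<and>
     \<comment> \<open>*-algebra structure on A0 (bilinearity comes from the linearity below)\<close>
     (\<forall>x\<in>A0. \<forall>y\<in>A0. \<forall>z\<in>A0. mul (mul x y) z = mul x (mul y z)) \<and>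
     (\<forall>x\<in>A0. \<forall>y\<in>A0. star (mul x y) = mul (star y) (star x)) \<and>
     \<comment> \<open>the involution on H: antilinear, involutive, isometric (hence the continuous
        extension of the involution of A0)\<close>
     (\<forall>\<xi> \<eta>. star (\<xi> + \<eta>) = star \<xi> + star \<eta>) \<and>
     (\<forall>c \<xi>. star (smul c \<xi>) = smul (cnj c) (star \<xi>)) \<and>
     (\<forall>\<xi>. star (star \<xi>) = \<xi>) \<and>
     (\<forall>\<xi>. hnorm ip (star \<xi>) = hnorm ip \<xi>) \<and>
     \<comment> \<open>products \<xi>x and x\<xi> (x in A0): linear and continuous in \<xi>, extending the product
        of A0; this includes Hilbert algebra axiom (i)\<close>
     (\<forall>x\<in>A0. clinear_map smul (\<lambda>\<xi>. mul \<xi> x) \<and> hbounded_map ip (\<lambda>\<xi>. mul \<xi> x)) \<and>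
     (\<forall>x\<in>A0. clinear_map smul (\<lambda>\<xi>. mul x \<xi>) \<and> hbounded_map ip (\<lambda>\<xi>. mul x \<xi>)) \<and>
     \<comment> \<open>Hilbert algebra axioms (ii), (iii), (iv)\<close>
     (\<forall>x\<in>A0. \<forall>y\<in>A0. \<forall>z\<in>A0. ip (mul x y) z = ip y (mul (star x) z)) \<and>
     (\<forall>x\<in>A0. \<forall>y\<in>A0. ip x y = ip (star y) (star x)) \<and>
     (\<forall>z\<in>A0. \<forall>e>0. \<exists>ps :: (complex \<times> 'h \<times> 'h) list.
        (\<forall>(c, x, y) \<in> set ps. x \<in> A0 \<and> y \<in> A0) \<and>
        hnorm ip (z - sum_list (map (\<lambda>(c, x, y). smul c (mul x y)) ps)) < e) \<and>
     \<comment> \<open>condition (A)\<close>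
     (\<forall>\<xi>. (\<forall>x\<in>A0. mul \<xi> x = 0) \<longrightarrow> \<xi> = 0)"

definition bounded_elems ::
  "('h \<Rightarrow> 'h \<Rightarrow> complex) \<Rightarrow> ('h \<Rightarrow> 'h \<Rightarrow> 'h) \<Rightarrow> 'h set \<Rightarrow> 'h set" where
  "bounded_elems ip mul A0 = {\<xi>. \<exists>C. \<forall>x\<in>A0. hnorm ip (mul \<xi> x) \<le> C * hnorm ip x}"

definition A0_plus ::
  "('h::ab_group_add \<Rightarrow> 'h) \<Rightarrow> ('h \<Rightarrow> 'h \<Rightarrow> 'h) \<Rightarrow> 'h set \<Rightarrow> 'h set" where
  "A0_plus star mul A0 =
     {sum_list (map (\<lambda>x. mul (star x) x) xs) | xs. xs \<noteq> [] \<and> set xs \<subseteq> A0}"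

definition H_plus ::
  "('h::ab_group_add \<Rightarrow> 'h \<Rightarrow> complex) \<Rightarrow> ('h \<Rightarrow> 'h) \<Rightarrow> ('h \<Rightarrow> 'h \<Rightarrow> 'h) \<Rightarrow> 'h set \<Rightarrow> 'h set" where
  "H_plus ip star mul A0 =
     {\<xi>. \<forall>e>0. \<exists>a\<in>A0_plus star mul A0. hnorm ip (\<xi> - a) < e}"

definition H_plus_w ::
  "('h \<Rightarrow> 'h \<Rightarrow> complex) \<Rightarrow> ('h \<Rightarrow> 'h \<Rightarrow> 'h) \<Rightarrow> 'h set \<Rightarrow> 'h set" where
  "H_plus_w ip mul A0 = {\<xi>. \<forall>x\<in>A0. cnonneg (ip (mul \<xi> x) x)}"

definition H_plus_wb ::
  "('h \<Rightarrow> 'h \<Rightarrow> complex) \<Rightarrow> ('h \<Rightarrow> 'h \<Rightarrow> 'h) \<Rightarrow> 'h set \<Rightarrow> 'h set" where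
  "H_plus_wb ip mul A0 = {\<xi> \<in> bounded_elems ip mul A0. \<forall>x\<in>A0. cnonneg (ip (mul \<xi> x) x)}"

definition representable ::
  "(complex \<Rightarrow> 'h::ab_group_add \<Rightarrow> 'h) \<Rightarrow> ('h \<Rightarrow> 'h) \<Rightarrow> ('h \<Rightarrow> 'h \<Rightarrow> 'h) \<Rightarrow> 'h set
   \<Rightarrow> ('h \<Rightarrow> complex) \<Rightarrow> bool" where
  "representable smul star mul A0 \<omega> \<longleftrightarrow>
     (\<forall>\<xi> \<eta>. \<omega> (\<xi> + \<eta>) = \<omega> \<xi> + \<omega> \<eta>) \<and>
     (\<forall>c \<xi>. \<omega> (smul c \<xi>) = c * \<omega> \<xi>) \<and>
     (\<forall>x\<in>A0. cnonneg (\<omega> (mul (star x) x))) \<and>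
     (\<forall>x\<in>A0. \<forall>y\<in>A0. \<forall>\<xi>.
        \<omega> (mul (star y) (mul (star \<xi>) x)) = cnj (\<omega> (mul (star x) (mul \<xi> y)))) \<and>
     (\<forall>\<xi>. \<exists>\<gamma>>0. \<forall>x\<in>A0. cmod (\<omega> (mul (star \<xi>) x)) \<le> \<gamma> * sqrt (Re (\<omega> (mul (star x) x))))"

definition Rc ::
  "(complex \<Rightarrow> 'h::ab_group_add \<Rightarrow> 'h) \<Rightarrow> ('h \<Rightarrow> 'h \<Rightarrow> complex) \<Rightarrow> ('h \<Rightarrow> 'h)
   \<Rightarrow> ('h \<Rightarrow> 'h \<Rightarrow> 'h) \<Rightarrow> 'h set \<Rightarrow> ('h \<Rightarrow> complex) set" where
  "Rc smul ip star mul A0 =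
     {\<omega>. representable smul star mul A0 \<omega> \<and> (\<exists>C. \<forall>\<xi>. cmod (\<omega> \<xi>) \<le> C * hnorm ip \<xi>)}"

definition condition_P ::
  "(complex \<Rightarrow> 'h::ab_group_add \<Rightarrow> 'h) \<Rightarrow> ('h \<Rightarrow> 'h \<Rightarrow> complex) \<Rightarrow> ('h \<Rightarrow> 'h)
   \<Rightarrow> ('h \<Rightarrow> 'h \<Rightarrow> 'h) \<Rightarrow> 'h set \<Rightarrow> bool" where
  "condition_P smul ip star mul A0 \<longleftrightarrow>
     (\<forall>\<xi>. (\<forall>\<omega>\<in>Rc smul ip star mul A0. \<forall>x\<in>A0. cnonneg (\<omega> (mul (star x) (mul \<xi> x))))
        \<longrightarrow> \<xi> \<in> H_plus ip star mul A0)"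

end

theory Submission
  imports Defs "HOL-Analysis.Analysis"
begin

locale hqa =
  fixes smul :: "complex \<Rightarrow> 'h::ab_group_add \<Rightarrow> 'h"
    and ip :: "'h \<Rightarrow> 'h \<Rightarrow> complex"
    and star :: "'h \<Rightarrow> 'h"
    and mul :: "'h \<Rightarrow> 'h \<Rightarrow> 'h"
    and A0 :: "'h set"
  assumes H: "hilbert_quasi_star_algebra smul ip star mul A0"
begin

lemma Hc: "hilbert_quasi_star_algebra smul ip star mul A0" using H .

lemma smul_add: "smul c (x + y) = smul c x + smul c y"
  using Hc[unfolded hilbert_quasi_star_algebra_def, THEN conjunct1] by blast

lemma add_smul: "smul (c + d) x = smul c x + smul d x"
  using Hc[unfolded hilbert_quasi_star_algebra_def, THEN conjunct2, THEN conjunct1] by blast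

lemma smul_smul: "smul (c * d) x = smul c (smul d x)"
  using Hc[unfolded hilbert_quasi_star_algebra_def, THEN conjunct2, THEN conjunct2, THEN conjunct1] by blast

lemma smul_one: "smul 1 x = x"
  using Hc[unfolded hilbert_quasi_star_algebra_def, THEN conjunct2, THEN conjunct2, THEN conjunct2, THEN conjunct1] by blast

lemma ip_add: "ip (x + y) z = ip x z + ip y z"
  using Hc[unfolded hilbert_quasi_star_algebra_def, THEN conjunct2, THEN conjunct2, THEN conjunct2, THEN conjunct2, THEN conjunct1] by blast

lemma ip_smul: "ip (smul c x) y = c * ip x y"
  using Hc[unfolded hilbert_quasi_star_algebra_def, THEN conjunct2, THEN conjunct2, THEN conjunct2, THEN conjunct2, THEN conjunct2, THEN conjunct1] by blast

lemma ip_sym: "ip y x = cnj (ip x y)"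
  using Hc[unfolded hilbert_quasi_star_algebra_def, THEN conjunct2, THEN conjunct2, THEN conjunct2, THEN conjunct2, THEN conjunct2, THEN conjunct2, THEN conjunct1] by blast

lemma ip_pos: "0 \<le> Re (ip x x)"
  using Hc[unfolded hilbert_quasi_star_algebra_def, THEN conjunct2, THEN conjunct2, THEN conjunct2, THEN conjunct2, THEN conjunct2, THEN conjunct2, THEN conjunct2, THEN conjunct1] by blast

lemma ip_zero: "ip x x = 0 \<Longrightarrow> x = 0"
  using Hc[unfolded hilbert_quasi_star_algebra_def, THEN conjunct2, THEN conjunct2, THEN conjunct2, THEN conjunct2, THEN conjunct2, THEN conjunct2, THEN conjunct2, THEN conjunct2, THEN conjunct1] by blast

lemma complete: "\<And>X :: nat \<Rightarrow> 'h. (\<forall>e>0. \<exists>N. \<forall>m\<ge>N. \<forall>n\<ge>N. hnorm ip (X m - X n) < e) \<Longrightarrow>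
        (\<exists>L. \<forall>e>0. \<exists>N. \<forall>n\<ge>N. hnorm ip (X n - L) < e)"
  using Hc[unfolded hilbert_quasi_star_algebra_def, THEN conjunct2, THEN conjunct2, THEN conjunct2, THEN conjunct2, THEN conjunct2, THEN conjunct2, THEN conjunct2, THEN conjunct2, THEN conjunct2, THEN conjunct1] by blast

lemma A0_0: "0 \<in> A0"
  using Hc[unfolded hilbert_quasi_star_algebra_def, THEN conjunct2, THEN conjunct2, THEN conjunct2, THEN conjunct2, THEN conjunct2, THEN conjunct2, THEN conjunct2, THEN conjunct2, THEN conjunct2, THEN conjunct2, THEN conjunct1] by blast

lemma A0_add: "x\<in>A0 \<Longrightarrow> y\<in>A0 \<Longrightarrow> x + y \<in> A0"
  using Hc[unfolded hilbert_quasi_star_algebra_def, THEN conjunct2, THEN conjunct2, THEN conjunct2, THEN conjunct2, THEN conjunct2, THEN conjunct2, THEN conjunct2, THEN conjunct2, THEN conjunct2, THEN conjunct2, THEN conjunct2, THEN conjunct1] by blast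

lemma A0_smul: "x \<in> A0 \<Longrightarrow> smul c x \<in> A0"
  using Hc[unfolded hilbert_quasi_star_algebra_def, THEN conjunct2, THEN conjunct2, THEN conjunct2, THEN conjunct2, THEN conjunct2, THEN conjunct2, THEN conjunct2, THEN conjunct2, THEN conjunct2, THEN conjunct2, THEN conjunct2, THEN conjunct2, THEN conjunct1] by blast

lemma A0_mul: "x\<in>A0 \<Longrightarrow> y\<in>A0 \<Longrightarrow> mul x y \<in> A0"
  using Hc[unfolded hilbert_quasi_star_algebra_def, THEN conjunct2, THEN conjunct2, THEN conjunct2, THEN conjunct2, THEN conjunct2, THEN conjunct2, THEN conjunct2, THEN conjunct2, THEN conjunct2, THEN conjunct2, THEN conjunct2, THEN conjunct2, THEN conjunct2, THEN conjunct1] by blast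

lemma A0_star: "x\<in>A0 \<Longrightarrow> star x \<in> A0"
  using Hc[unfolded hilbert_quasi_star_algebra_def, THEN conjunct2, THEN conjunct2, THEN conjunct2, THEN conjunct2, THEN conjunct2, THEN conjunct2, THEN conjunct2, THEN conjunct2, THEN conjunct2, THEN conjunct2, THEN conjunct2, THEN conjunct2, THEN conjunct2, THEN conjunct2, THEN conjunct1] by blast

lemma dense: "e > 0 \<Longrightarrow> (\<exists>x\<in>A0. hnorm ip (\<xi> - x) < e)"
  using Hc[unfolded hilbert_quasi_star_algebra_def, THEN conjunct2, THEN conjunct2, THEN conjunct2, THEN conjunct2, THEN conjunct2, THEN conjunct2, THEN conjunct2, THEN conjunct2, THEN conjunct2, THEN conjunct2, THEN conjunct2, THEN conjunct2, THEN conjunct2, THEN conjunct2, THEN conjunct2, THEN conjunct1] by blast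

lemma assoc: "x\<in>A0 \<Longrightarrow> y\<in>A0 \<Longrightarrow> z\<in>A0 \<Longrightarrow> mul (mul x y) z = mul x (mul y z)"
  using Hc[unfolded hilbert_quasi_star_algebra_def, THEN conjunct2, THEN conjunct2, THEN conjunct2, THEN conjunct2, THEN conjunct2, THEN conjunct2, THEN conjunct2, THEN conjunct2, THEN conjunct2, THEN conjunct2, THEN conjunct2, THEN conjunct2, THEN conjunct2, THEN conjunct2, THEN conjunct2, THEN conjunct2, THEN conjunct1] by blast

lemma star_mul: "x\<in>A0 \<Longrightarrow> y\<in>A0 \<Longrightarrow> star (mul x y) = mul (star y) (star x)"
  using Hc[unfolded hilbert_quasi_star_algebra_def, THEN conjunct2, THEN conjunct2, THEN conjunct2, THEN conjunct2, THEN conjunct2, THEN conjunct2, THEN conjunct2, THEN conjunct2, THEN conjunct2, THEN conjunct2, THEN conjunct2, THEN conjunct2, THEN conjunct2, THEN conjunct2, THEN conjunct2, THEN conjunct2, THEN conjunct2, THEN conjunct1] by blast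

lemma star_add: "star (\<xi> + \<eta>) = star \<xi> + star \<eta>"
  using Hc[unfolded hilbert_quasi_star_algebra_def, THEN conjunct2, THEN conjunct2, THEN conjunct2, THEN conjunct2, THEN conjunct2, THEN conjunct2, THEN conjunct2, THEN conjunct2, THEN conjunct2, THEN conjunct2, THEN conjunct2, THEN conjunct2, THEN conjunct2, THEN conjunct2, THEN conjunct2, THEN conjunct2, THEN conjunct2, THEN conjunct2, THEN conjunct1] by blast

lemma star_smul: "star (smul c \<xi>) = smul (cnj c) (star \<xi>)"
  using Hc[unfolded hilbert_quasi_star_algebra_def, THEN conjunct2, THEN conjunct2, THEN conjunct2, THEN conjunct2, THEN conjunct2, THEN conjunct2, THEN conjunct2, THEN conjunct2, THEN conjunct2, THEN conjunct2, THEN conjunct2, THEN conjunct2, THEN conjunct2, THEN conjunct2, THEN conjunct2, THEN conjunct2, THEN conjunct2, THEN conjunct2, THEN conjunct2, THEN conjunct1] by blast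

lemma star_star: "star (star \<xi>) = \<xi>"
  using Hc[unfolded hilbert_quasi_star_algebra_def, THEN conjunct2, THEN conjunct2, THEN conjunct2, THEN conjunct2, THEN conjunct2, THEN conjunct2, THEN conjunct2, THEN conjunct2, THEN conjunct2, THEN conjunct2, THEN conjunct2, THEN conjunct2, THEN conjunct2, THEN conjunct2, THEN conjunct2, THEN conjunct2, THEN conjunct2, THEN conjunct2, THEN conjunct2, THEN conjunct2, THEN conjunct1] by blast

lemma star_norm: "hnorm ip (star \<xi>) = hnorm ip \<xi>"
  using Hc[unfolded hilbert_quasi_star_algebra_def, THEN conjunct2, THEN conjunct2, THEN conjunct2, THEN conjunct2, THEN conjunct2, THEN conjunct2, THEN conjunct2, THEN conjunct2, THEN conjunct2, THEN conjunct2, THEN conjunct2, THEN conjunct2, THEN conjunct2, THEN conjunct2, THEN conjunct2, THEN conjunct2, THEN conjunct2, THEN conjunct2, THEN conjunct2, THEN conjunct2, THEN conjunct2, THEN conjunct1] by blast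

lemma rmul: "x\<in>A0 \<Longrightarrow> clinear_map smul (\<lambda>\<xi>. mul \<xi> x) \<and> hbounded_map ip (\<lambda>\<xi>. mul \<xi> x)"
  using Hc[unfolded hilbert_quasi_star_algebra_def, THEN conjunct2, THEN conjunct2, THEN conjunct2, THEN conjunct2, THEN conjunct2, THEN conjunct2, THEN conjunct2, THEN conjunct2, THEN conjunct2, THEN conjunct2, THEN conjunct2, THEN conjunct2, THEN conjunct2, THEN conjunct2, THEN conjunct2, THEN conjunct2, THEN conjunct2, THEN conjunct2, THEN conjunct2, THEN conjunct2, THEN conjunct2, THEN conjunct2, THEN conjunct1] by blast

lemma lmul: "x\<in>A0 \<Longrightarrow> clinear_map smul (\<lambda>\<xi>. mul x \<xi>) \<and> hbounded_map ip (\<lambda>\<xi>. mul x \<xi>)"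
  using Hc[unfolded hilbert_quasi_star_algebra_def, THEN conjunct2, THEN conjunct2, THEN conjunct2, THEN conjunct2, THEN conjunct2, THEN conjunct2, THEN conjunct2, THEN conjunct2, THEN conjunct2, THEN conjunct2, THEN conjunct2, THEN conjunct2, THEN conjunct2, THEN conjunct2, THEN conjunct2, THEN conjunct2, THEN conjunct2, THEN conjunct2, THEN conjunct2, THEN conjunct2, THEN conjunct2, THEN conjunct2, THEN conjunct2, THEN conjunct1] by blast

lemma adj0: "x\<in>A0 \<Longrightarrow> y\<in>A0 \<Longrightarrow> z\<in>A0 \<Longrightarrow> ip (mul x y) z = ip y (mul (star x) z)"
  using Hc[unfolded hilbert_quasi_star_algebra_def, THEN conjunct2, THEN conjunct2, THEN conjunct2, THEN conjunct2, THEN conjunct2, THEN conjunct2, THEN conjunct2, THEN conjunct2, THEN conjunct2, THEN conjunct2, THEN conjunct2, THEN conjunct2, THEN conjunct2, THEN conjunct2, THEN conjunct2, THEN conjunct2, THEN conjunct2, THEN conjunct2, THEN conjunct2, THEN conjunct2, THEN conjunct2, THEN conjunct2, THEN conjunct2, THEN conjunct2, THEN conjunct1] by blast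

lemma ipstar0: "x\<in>A0 \<Longrightarrow> y\<in>A0 \<Longrightarrow> ip x y = ip (star y) (star x)"
  using Hc[unfolded hilbert_quasi_star_algebra_def, THEN conjunct2, THEN conjunct2, THEN conjunct2, THEN conjunct2, THEN conjunct2, THEN conjunct2, THEN conjunct2, THEN conjunct2, THEN conjunct2, THEN conjunct2, THEN conjunct2, THEN conjunct2, THEN conjunct2, THEN conjunct2, THEN conjunct2, THEN conjunct2, THEN conjunct2, THEN conjunct2, THEN conjunct2, THEN conjunct2, THEN conjunct2, THEN conjunct2, THEN conjunct2, THEN conjunct2, THEN conjunct2, THEN conjunct1] by blast

lemma condA: "(\<forall>x\<in>A0. mul \<xi> x = 0) \<Longrightarrow> \<xi> = 0"
  using Hc[unfolded hilbert_quasi_star_algebra_def, THEN conjunct2, THEN conjunct2, THEN conjunct2, THEN conjunct2, THEN conjunct2, THEN conjunct2, THEN conjunct2, THEN conjunct2, THEN conjunct2, THEN conjunct2, THEN conjunct2, THEN conjunct2, THEN conjunct2, THEN conjunct2, THEN conjunct2, THEN conjunct2, THEN conjunct2, THEN conjunct2, THEN conjunct2, THEN conjunct2, THEN conjunct2, THEN conjunct2, THEN conjunct2, THEN conjunct2, THEN conjunct2, THEN conjunct2, THEN conjunct2] by blast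


end

context hqa begin

lemma smul_zero_left[simp]: "smul 0 x = 0"
proof -
  have "smul 0 x = smul 0 x + smul 0 x" by (metis add_smul add_0)
  then show ?thesis by (metis add_cancel_right_right)
qed

lemma smul_zero[simp]: "smul c 0 = 0"
proof -
  have "smul c 0 = smul c 0 + smul c 0" by (metis smul_add add_0)
  then show ?thesis by (metis add_cancel_right_right)
qed

lemma smul_neg: "smul c (- x) = - smul c x"
proof -
  have "smul c x + smul c (-x) = 0" by (metis smul_add smul_zero add.right_inverse)
  then show ?thesis by (metis neg_eq_iff_add_eq_0)
qed

lemma neg_smul: "smul (- c) x = - smul c x"
proof -
  have "smul c x + smul (-c) x = 0" by (metis add_smul smul_zero_left add.right_inverse)
  then show ?thesis by (metis neg_eq_iff_add_eq_0)
qed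

lemma smul_diff: "smul c (x - y) = smul c x - smul c y"
  by (simp only: diff_conv_add_uminus smul_add smul_neg)

lemma diff_smul: "smul (c - d) x = smul c x - smul d x"
  by (simp only: diff_conv_add_uminus add_smul neg_smul)

lemma smul_minus1: "smul (-1) x = - x"
  by (simp add: neg_smul smul_one)

lemma ip_zero_left[simp]: "ip 0 y = 0"
proof -
  have "ip 0 y = ip 0 y + ip 0 y" by (metis ip_add add_0)
  then show ?thesis by (metis add_cancel_right_right)
qed

lemma ip_zero_right[simp]: "ip y 0 = 0"
proof -
  have "ip y 0 = cnj (ip 0 y)" by (rule ip_sym)
  then show ?thesis by simp
qed

lemma ip_neg: "ip (- x) y = - ip x y"
proof -
  have "ip x y + ip (-x) y = 0" by (metis ip_add ip_zero_left add.right_inverse)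
  then show ?thesis by (metis neg_eq_iff_add_eq_0)
qed

lemma ip_diff: "ip (x - y) z = ip x z - ip y z"
  by (simp only: diff_conv_add_uminus ip_add ip_neg)

lemma ip_add2: "ip x (y + z) = ip x y + ip x z"
proof -
  have "ip x (y + z) = cnj (ip (y + z) x)" by (rule ip_sym)
  also have "\<dots> = cnj (ip y x) + cnj (ip z x)" by (simp add: ip_add)
  also have "\<dots> = ip x y + ip x z" using ip_sym[of y x] ip_sym[of z x] by simp
  finally show ?thesis .
qed

lemma ip_smul2: "ip x (smul c y) = cnj c * ip x y"
proof -
  have "ip x (smul c y) = cnj (ip (smul c y) x)" by (rule ip_sym)
  also have "\<dots> = cnj c * cnj (ip y x)" by (simp add: ip_smul)
  also have "\<dots> = cnj c * ip x y" using ip_sym[of y x] by simp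
  finally show ?thesis .
qed

lemma ip_neg2: "ip x (- y) = - ip x y"
proof -
  have "ip x (- y) = cnj (ip (- y) x)" by (rule ip_sym)
  also have "\<dots> = - cnj (ip y x)" by (simp add: ip_neg)
  also have "\<dots> = - ip x y" using ip_sym[of y x] by simp
  finally show ?thesis .
qed

lemma ip_diff2: "ip x (y - z) = ip x y - ip x z"
  by (simp only: diff_conv_add_uminus ip_add2 ip_neg2)

lemma ip_self_Im: "Im (ip x x) = 0"
proof -
  have "Im (ip x x) = Im (cnj (ip x x))" using ip_sym[of x x] by (rule arg_cong)
  then have "Im (ip x x) = - Im (ip x x)" by (simp only: cnj.simps)
  then show ?thesis by linarith
qed

lemma ip_self_real: "ip x x = complex_of_real (Re (ip x x))"
  using ip_self_Im by (simp add: complex_eq_iff)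

lemma hnorm_sq: "(hnorm ip x)\<^sup>2 = Re (ip x x)"
  using ip_pos[of x] by (simp add: hnorm_def)

lemma hnorm_nonneg[simp]: "0 \<le> hnorm ip x"
  using ip_pos[of x] by (simp add: hnorm_def)

lemma hnorm_zero_iff: "hnorm ip x = 0 \<longleftrightarrow> x = 0"
proof
  assume "hnorm ip x = 0"
  then have "Re (ip x x) = 0" by (simp add: hnorm_def ip_pos)
  then have "ip x x = 0" using ip_self_real by (metis of_real_0)
  then show "x = 0" by (rule ip_zero)
qed (simp add: hnorm_def)

lemma hnorm_0[simp]: "hnorm ip 0 = 0"
  by (simp add: hnorm_zero_iff)

lemma ip_expand: "ip (x + smul t y) (x + smul t y) = ip x x + cnj t * ip x y + t * ip y x + t * cnj t * ip y y"
  by (simp add: ip_add ip_add2 ip_smul ip_smul2 algebra_simps)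

lemma cauchy_schwarz_sq: "(cmod (ip x y))\<^sup>2 \<le> Re (ip x x) * Re (ip y y)"
proof (cases "y = 0")
  case True then show ?thesis by simp
next
  case False
  define n where "n = Re (ip y y)"
  have yy: "ip y y = complex_of_real n" unfolding n_def by (rule ip_self_real)
  have "n \<noteq> 0"
  proof
    assume "n = 0"
    then have "ip y y = 0" using yy by simp
    then show False using False ip_zero by blast
  qed
  moreover have "n \<ge> 0" using ip_pos n_def by simp
  ultimately have n0: "n > 0" by simp
  define a where "a = ip x y"
  have yx: "ip y x = cnj a" unfolding a_def by (rule ip_sym)
  define t where "t = - a / complex_of_real n"
  have aa: "a * cnj a = complex_of_real ((cmod a)\<^sup>2)" using complex_norm_square[of a] by simp
  have "0 \<le> Re (ip (x + smul t y) (x + smul t y))" by (rule ip_pos)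
  also have "ip (x + smul t y) (x + smul t y) = ip x x + cnj t * a + t * cnj a + t * cnj t * complex_of_real n"
    unfolding ip_expand yy yx a_def ..
  also have "\<dots> = ip x x - a * cnj a / complex_of_real n"
    unfolding t_def using n0 by (simp add: field_simps)
  also have "\<dots> = ip x x - complex_of_real ((cmod a)\<^sup>2 / n)"
    unfolding aa by simp
  finally have "(cmod a)\<^sup>2 / n \<le> Re (ip x x)" by simp
  then have "(cmod a)\<^sup>2 \<le> Re (ip x x) * n" using n0 by (simp add: divide_le_eq)
  then show ?thesis by (simp add: a_def n_def)
qed

lemma cauchy_schwarz: "cmod (ip x y) \<le> hnorm ip x * hnorm ip y"
proof -
  have "(hnorm ip x * hnorm ip y)\<^sup>2 = Re (ip x x) * Re (ip y y)"
    by (simp only: power_mult_distrib hnorm_sq)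
  then have "(cmod (ip x y))\<^sup>2 \<le> (hnorm ip x * hnorm ip y)\<^sup>2"
    using cauchy_schwarz_sq[of x y] by linarith
  then show ?thesis by (rule power2_le_imp_le) simp
qed

lemma hnorm_triangle: "hnorm ip (x + y) \<le> hnorm ip x + hnorm ip y"
proof -
  have "Re (ip (x+y) (x+y)) = Re (ip x x) + Re (ip y y) + 2 * Re (ip x y)"
    using ip_sym[of x y] by (simp add: ip_add ip_add2)
  also have "\<dots> \<le> Re (ip x x) + Re (ip y y) + 2 * (hnorm ip x * hnorm ip y)"
    using cauchy_schwarz[of x y] complex_Re_le_cmod[of "ip x y"] by linarith
  also have "\<dots> = (hnorm ip x + hnorm ip y)\<^sup>2"
    by (simp add: power2_sum hnorm_sq)
  finally have "(hnorm ip (x+y))\<^sup>2 \<le> (hnorm ip x + hnorm ip y)\<^sup>2" by (simp add: hnorm_sq)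
  then show ?thesis by (rule power2_le_imp_le) simp
qed

lemma hnorm_neg: "hnorm ip (- x) = hnorm ip x"
  by (simp add: hnorm_def ip_neg ip_neg2)

lemma hnorm_smul: "hnorm ip (smul c x) = cmod c * hnorm ip x"
proof -
  have "ip (smul c x) (smul c x) = (c * cnj c) * ip x x"
    by (simp add: ip_smul ip_smul2)
  also have "c * cnj c = complex_of_real ((cmod c)\<^sup>2)"
    using complex_norm_square[of c] by simp
  finally have "ip (smul c x) (smul c x) = complex_of_real ((cmod c)\<^sup>2) * ip x x" .
  then have "Re (ip (smul c x) (smul c x)) = (cmod c)\<^sup>2 * Re (ip x x)"
    by simp
  then show ?thesis by (simp add: hnorm_def real_sqrt_mult)
qed

lemma hnorm_commute: "hnorm ip (x - y) = hnorm ip (y - x)"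
  by (metis hnorm_neg minus_diff_eq)

lemma hnorm_triangle_diff: "hnorm ip (x - z) \<le> hnorm ip (x - y) + hnorm ip (y - z)"
  using hnorm_triangle[of "x - y" "y - z"] by simp

lemma hnorm_diff_ge: "hnorm ip x - hnorm ip y \<le> hnorm ip (x - y)"
  using hnorm_triangle[of "x - y" y] by simp

end

lemma additive_diff:
  fixes f :: "'a::ab_group_add \<Rightarrow> 'b::ab_group_add"
  assumes "\<forall>x y. f (x + y) = f x + f y"
  shows "f (a - b) = f a - f b"
proof -
  have "f a = f (a - b) + f b" using assms by (metis diff_add_cancel)
  then show ?thesis by (simp add: eq_diff_eq)
qed

lemma cnonneg_closed:
  assumes "\<And>e. e > 0 \<Longrightarrow> \<exists>z. cnonneg z \<and> cmod (w - z) < e"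
  shows "cnonneg w"
proof -
  have im: "\<bar>Im w\<bar> < e" and re: "- e < Re w" if ep: "e > 0" for e
  proof -
    obtain z where z: "cnonneg z" "cmod (w - z) < e" using assms[OF ep] by blast
    have "\<bar>Im (w - z)\<bar> \<le> cmod (w - z)" by (rule abs_Im_le_cmod)
    moreover have "\<bar>Re (w - z)\<bar> \<le> cmod (w - z)" by (rule abs_Re_le_cmod)
    ultimately show "\<bar>Im w\<bar> < e" "- e < Re w" using z by (auto simp: cnonneg_def)
  qed
  have "Im w = 0"
  proof (rule ccontr)
    assume "Im w \<noteq> 0"
    then have "\<bar>Im w\<bar> > 0" by simp
    from im[OF this] show False by simp
  qed
  moreover have "Re w \<ge> 0"
  proof (rule ccontr)
    assume "\<not> Re w \<ge> 0"
    then have "- Re w > 0" by simp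
    from re[OF this] show False by simp
  qed
  ultimately show ?thesis by (simp add: cnonneg_def)
qed

lemma cnonneg_cnj: "cnonneg (cnj z) \<longleftrightarrow> cnonneg z"
  by (auto simp: cnonneg_def)

lemma cnonneg_add: "cnonneg a \<Longrightarrow> cnonneg b \<Longrightarrow> cnonneg (a + b)"
  by (auto simp: cnonneg_def)

context hqa begin

lemma rmul_add: "x \<in> A0 \<Longrightarrow> mul (a + b) x = mul a x + mul b x"
  using rmul[of x] unfolding clinear_map_def by blast

lemma rmul_diff: "x \<in> A0 \<Longrightarrow> mul (a - b) x = mul a x - mul b x"
  using rmul[of x] unfolding clinear_map_def
  by (intro additive_diff[where f="\<lambda>\<xi>. mul \<xi> x"]) blast

lemma rmul_bound: "x \<in> A0 \<Longrightarrow> \<exists>C. \<forall>\<xi>. hnorm ip (mul \<xi> x) \<le> C * hnorm ip \<xi>"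
  using rmul[of x] unfolding hbounded_map_def by blast

lemma lmul_add: "x \<in> A0 \<Longrightarrow> mul x (a + b) = mul x a + mul x b"
  using lmul[of x] unfolding clinear_map_def by blast

lemma lmul_diff: "x \<in> A0 \<Longrightarrow> mul x (a - b) = mul x a - mul x b"
  using lmul[of x] unfolding clinear_map_def
  by (intro additive_diff[where f="\<lambda>\<xi>. mul x \<xi>"]) blast

lemma lmul_bound: "x \<in> A0 \<Longrightarrow> \<exists>C. \<forall>\<xi>. hnorm ip (mul x \<xi>) \<le> C * hnorm ip \<xi>"
  using lmul[of x] unfolding hbounded_map_def by blast

lemma dense_zero:
  assumes lip: "\<And>a b. cmod (F a - F b) \<le> K * hnorm ip (a - b)"
    and z: "\<And>x. x \<in> A0 \<Longrightarrow> F x = 0"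
  shows "F \<xi> = 0"
proof -
  have "cmod (F \<xi>) < e" if "e > 0" for e
  proof -
    define K' where "K' = \<bar>K\<bar> + 1"
    have K': "K' > 0" "K \<le> K'" by (auto simp: K'_def)
    obtain x where x: "x \<in> A0" "hnorm ip (\<xi> - x) < e / K'"
      using dense[of "e / K'" \<xi>] K' \<open>e > 0\<close> by auto
    have "cmod (F \<xi>) = cmod (F \<xi> - F x)" using z[OF x(1)] by simp
    also have "\<dots> \<le> K * hnorm ip (\<xi> - x)" by (rule lip)
    also have "\<dots> \<le> K' * hnorm ip (\<xi> - x)" using K' by (intro mult_right_mono) auto
    also have "\<dots> < K' * (e / K')" using x K' by (intro mult_strict_left_mono) auto
    also have "\<dots> = e" using K' by simp
    finally show ?thesis .
  qed
  then have "cmod (F \<xi>) \<le> 0"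
    by (metis less_irrefl norm_not_less_zero not_le_imp_less zero_less_norm_iff)
  then show ?thesis by simp
qed

lemma dense_zero_h:
  assumes lip: "\<And>a b. hnorm ip (G a - G b) \<le> K * hnorm ip (a - b)"
    and z: "\<And>x. x \<in> A0 \<Longrightarrow> G x = 0"
  shows "G \<xi> = 0"
proof -
  have "hnorm ip (G \<xi>) < e" if "e > 0" for e
  proof -
    define K' where "K' = \<bar>K\<bar> + 1"
    have K': "K' > 0" "K \<le> K'" by (auto simp: K'_def)
    obtain x where x: "x \<in> A0" "hnorm ip (\<xi> - x) < e / K'"
      using dense[of "e / K'" \<xi>] K' \<open>e > 0\<close> by auto
    have "hnorm ip (G \<xi>) = hnorm ip (G \<xi> - G x)" using z[OF x(1)] by simp
    also have "\<dots> \<le> K * hnorm ip (\<xi> - x)" by (rule lip)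
    also have "\<dots> \<le> K' * hnorm ip (\<xi> - x)" using K' by (intro mult_right_mono) auto
    also have "\<dots> < K' * (e / K')" using x K' by (intro mult_strict_left_mono) auto
    also have "\<dots> = e" using K' by simp
    finally show ?thesis .
  qed
  then have "hnorm ip (G \<xi>) \<le> 0"
    by (metis hnorm_nonneg less_irrefl not_le_imp_less)
  then show ?thesis using hnorm_nonneg hnorm_zero_iff by (metis order_antisym)
qed

lemma rmul_lip: "x \<in> A0 \<Longrightarrow> \<exists>C. \<forall>a b. hnorm ip (mul a x - mul b x) \<le> C * hnorm ip (a - b)"
  using rmul_bound[of x] rmul_diff[of x] by metis

lemma lmul_lip: "x \<in> A0 \<Longrightarrow> \<exists>C. \<forall>a b. hnorm ip (mul x a - mul x b) \<le> C * hnorm ip (a - b)"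
  using lmul_bound[of x] lmul_diff[of x] by metis

end

context hqa begin

lemma rmul_lip0: "x \<in> A0 \<Longrightarrow> \<exists>C\<ge>0. \<forall>a b. hnorm ip (mul a x - mul b x) \<le> C * hnorm ip (a - b)"
proof -
  assume "x \<in> A0"
  then obtain C where C: "\<forall>a b. hnorm ip (mul a x - mul b x) \<le> C * hnorm ip (a - b)"
    using rmul_lip by blast
  have "\<forall>a b. hnorm ip (mul a x - mul b x) \<le> max C 0 * hnorm ip (a - b)"
  proof (intro allI)
    fix a b
    have "C * hnorm ip (a - b) \<le> max C 0 * hnorm ip (a - b)"
      by (intro mult_right_mono) auto
    then show "hnorm ip (mul a x - mul b x) \<le> max C 0 * hnorm ip (a - b)" using C by (meson order_trans)
  qed
  then show ?thesis by (intro exI[of _ "max C 0"]) auto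
qed

lemma lmul_lip0: "x \<in> A0 \<Longrightarrow> \<exists>C\<ge>0. \<forall>a b. hnorm ip (mul x a - mul x b) \<le> C * hnorm ip (a - b)"
proof -
  assume "x \<in> A0"
  then obtain C where C: "\<forall>a b. hnorm ip (mul x a - mul x b) \<le> C * hnorm ip (a - b)"
    using lmul_lip by blast
  have "\<forall>a b. hnorm ip (mul x a - mul x b) \<le> max C 0 * hnorm ip (a - b)"
  proof (intro allI)
    fix a b
    have "C * hnorm ip (a - b) \<le> max C 0 * hnorm ip (a - b)"
      by (intro mult_right_mono) auto
    then show "hnorm ip (mul x a - mul x b) \<le> max C 0 * hnorm ip (a - b)" using C by (meson order_trans)
  qed
  then show ?thesis by (intro exI[of _ "max C 0"]) auto
qed

lemma ip_diff_bound: "cmod (ip p q - ip r s) \<le> hnorm ip p * hnorm ip q + hnorm ip r * hnorm ip s"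
proof -
  have "cmod (ip p q - ip r s) \<le> cmod (ip p q) + cmod (ip r s)" by (rule norm_triangle_ineq4)
  also have "\<dots> \<le> hnorm ip p * hnorm ip q + hnorm ip r * hnorm ip s"
    by (intro add_mono cauchy_schwarz)
  finally show ?thesis .
qed

lemma ladj: assumes x: "x \<in> A0" shows "ip (mul x \<zeta>) w = ip \<zeta> (mul (star x) w)"
proof -
  obtain C where C: "C \<ge> 0" "\<forall>a b. hnorm ip (mul x a - mul x b) \<le> C * hnorm ip (a - b)"
    using lmul_lip0[OF x] by blast
  obtain D where D: "D \<ge> 0" "\<forall>a b. hnorm ip (mul (star x) a - mul (star x) b) \<le> D * hnorm ip (a - b)"
    using lmul_lip0[OF A0_star[OF x]] by blast
  have step1: "ip (mul x \<zeta>) w - ip \<zeta> (mul (star x) w) = 0" if w: "w \<in> A0" for w \<zeta>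
  proof (rule dense_zero[where F="\<lambda>\<zeta>. ip (mul x \<zeta>) w - ip \<zeta> (mul (star x) w)"])
    fix a b
    have "(ip (mul x a) w - ip a (mul (star x) w)) - (ip (mul x b) w - ip b (mul (star x) w))
        = ip (mul x a - mul x b) w - ip (a - b) (mul (star x) w)"
      by (simp add: ip_diff)
    then have "cmod ((ip (mul x a) w - ip a (mul (star x) w)) - (ip (mul x b) w - ip b (mul (star x) w)))
        \<le> hnorm ip (mul x a - mul x b) * hnorm ip w + hnorm ip (a - b) * hnorm ip (mul (star x) w)"
      using ip_diff_bound by metis
    also have "\<dots> \<le> (C * hnorm ip (a - b)) * hnorm ip w + hnorm ip (a - b) * hnorm ip (mul (star x) w)"
      using C by (intro add_mono mult_right_mono) auto
    also have "\<dots> = (C * hnorm ip w + hnorm ip (mul (star x) w)) * hnorm ip (a - b)"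
      by (simp add: algebra_simps)
    finally show "cmod ((ip (mul x a) w - ip a (mul (star x) w)) - (ip (mul x b) w - ip b (mul (star x) w)))
        \<le> (C * hnorm ip w + hnorm ip (mul (star x) w)) * hnorm ip (a - b)" .
  next
    fix z assume "z \<in> A0"
    then show "ip (mul x z) w - ip z (mul (star x) w) = 0" using adj0[OF x _ w] by simp
  qed
  have "ip (mul x \<zeta>) w - ip \<zeta> (mul (star x) w) = 0"
  proof (rule dense_zero[where F="\<lambda>w. ip (mul x \<zeta>) w - ip \<zeta> (mul (star x) w)"])
    fix a b
    have "(ip (mul x \<zeta>) a - ip \<zeta> (mul (star x) a)) - (ip (mul x \<zeta>) b - ip \<zeta> (mul (star x) b))
        = ip (mul x \<zeta>) (a - b) - ip \<zeta> (mul (star x) a - mul (star x) b)"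
      by (simp add: ip_diff2)
    then have "cmod ((ip (mul x \<zeta>) a - ip \<zeta> (mul (star x) a)) - (ip (mul x \<zeta>) b - ip \<zeta> (mul (star x) b)))
        \<le> hnorm ip (mul x \<zeta>) * hnorm ip (a - b) + hnorm ip \<zeta> * hnorm ip (mul (star x) a - mul (star x) b)"
      using ip_diff_bound by metis
    also have "\<dots> \<le> hnorm ip (mul x \<zeta>) * hnorm ip (a - b) + hnorm ip \<zeta> * (D * hnorm ip (a - b))"
      using D by (intro add_mono mult_left_mono) auto
    also have "\<dots> = (hnorm ip (mul x \<zeta>) + hnorm ip \<zeta> * D) * hnorm ip (a - b)"
      by (simp add: algebra_simps)
    finally show "cmod ((ip (mul x \<zeta>) a - ip \<zeta> (mul (star x) a)) - (ip (mul x \<zeta>) b - ip \<zeta> (mul (star x) b)))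
        \<le> (hnorm ip (mul x \<zeta>) + hnorm ip \<zeta> * D) * hnorm ip (a - b)" .
  next
    fix z assume "z \<in> A0"
    then show "ip (mul x \<zeta>) z - ip \<zeta> (mul (star x) z) = 0" using step1 by blast
  qed
  then show ?thesis by simp
qed

lemma radj0: assumes y: "y \<in> A0" and z: "z \<in> A0" and w: "w \<in> A0"
  shows "ip (mul z y) w = ip z (mul w (star y))"
proof -
  have "ip (mul z y) w = ip (star w) (star (mul z y))" using ipstar0[OF A0_mul[OF z y] w] .
  also have "\<dots> = ip (star w) (mul (star y) (star z))" using star_mul[OF z y] by simp
  also have "\<dots> = cnj (ip (mul (star y) (star z)) (star w))" by (rule ip_sym)
  also have "\<dots> = cnj (ip (star z) (mul (star (star y)) (star w)))"
    using adj0[OF A0_star[OF y] A0_star[OF z] A0_star[OF w]] by simp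
  also have "\<dots> = cnj (ip (star z) (mul y (star w)))" by (simp add: star_star)
  also have "\<dots> = ip (mul y (star w)) (star z)" using ip_sym[of "star z" "mul y (star w)"] by simp
  also have "\<dots> = ip (star (star z)) (star (mul y (star w)))"
    using ipstar0[OF A0_mul[OF y A0_star[OF w]] A0_star[OF z]] .
  also have "\<dots> = ip z (mul w (star y))"
    using star_mul[OF y A0_star[OF w]] by (simp add: star_star)
  finally show ?thesis .
qed

lemma radj: assumes y: "y \<in> A0" shows "ip (mul \<zeta> y) w = ip \<zeta> (mul w (star y))"
proof -
  obtain C where C: "C \<ge> 0" "\<forall>a b. hnorm ip (mul a y - mul b y) \<le> C * hnorm ip (a - b)"
    using rmul_lip0[OF y] by blast
  obtain D where D: "D \<ge> 0" "\<forall>a b. hnorm ip (mul a (star y) - mul b (star y)) \<le> D * hnorm ip (a - b)"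
    using rmul_lip0[OF A0_star[OF y]] by blast
  have step1: "ip (mul \<zeta> y) w - ip \<zeta> (mul w (star y)) = 0" if w: "w \<in> A0" for w \<zeta>
  proof (rule dense_zero[where F="\<lambda>\<zeta>. ip (mul \<zeta> y) w - ip \<zeta> (mul w (star y))"])
    fix a b
    have "(ip (mul a y) w - ip a (mul w (star y))) - (ip (mul b y) w - ip b (mul w (star y)))
        = ip (mul a y - mul b y) w - ip (a - b) (mul w (star y))"
      by (simp add: ip_diff)
    then have "cmod ((ip (mul a y) w - ip a (mul w (star y))) - (ip (mul b y) w - ip b (mul w (star y))))
        \<le> hnorm ip (mul a y - mul b y) * hnorm ip w + hnorm ip (a - b) * hnorm ip (mul w (star y))"
      using ip_diff_bound by metis
    also have "\<dots> \<le> (C * hnorm ip (a - b)) * hnorm ip w + hnorm ip (a - b) * hnorm ip (mul w (star y))"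
      using C by (intro add_mono mult_right_mono) auto
    also have "\<dots> = (C * hnorm ip w + hnorm ip (mul w (star y))) * hnorm ip (a - b)"
      by (simp add: algebra_simps)
    finally show "cmod ((ip (mul a y) w - ip a (mul w (star y))) - (ip (mul b y) w - ip b (mul w (star y))))
        \<le> (C * hnorm ip w + hnorm ip (mul w (star y))) * hnorm ip (a - b)" .
  next
    fix z assume "z \<in> A0"
    then show "ip (mul z y) w - ip z (mul w (star y)) = 0" using radj0[OF y _ w] by simp
  qed
  have "ip (mul \<zeta> y) w - ip \<zeta> (mul w (star y)) = 0"
  proof (rule dense_zero[where F="\<lambda>w. ip (mul \<zeta> y) w - ip \<zeta> (mul w (star y))"])
    fix a b
    have "(ip (mul \<zeta> y) a - ip \<zeta> (mul a (star y))) - (ip (mul \<zeta> y) b - ip \<zeta> (mul b (star y)))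
        = ip (mul \<zeta> y) (a - b) - ip \<zeta> (mul a (star y) - mul b (star y))"
      by (simp add: ip_diff2)
    then have "cmod ((ip (mul \<zeta> y) a - ip \<zeta> (mul a (star y))) - (ip (mul \<zeta> y) b - ip \<zeta> (mul b (star y))))
        \<le> hnorm ip (mul \<zeta> y) * hnorm ip (a - b) + hnorm ip \<zeta> * hnorm ip (mul a (star y) - mul b (star y))"
      using ip_diff_bound by metis
    also have "\<dots> \<le> hnorm ip (mul \<zeta> y) * hnorm ip (a - b) + hnorm ip \<zeta> * (D * hnorm ip (a - b))"
      using D by (intro add_mono mult_left_mono) auto
    also have "\<dots> = (hnorm ip (mul \<zeta> y) + hnorm ip \<zeta> * D) * hnorm ip (a - b)"
      by (simp add: algebra_simps)
    finally show "cmod ((ip (mul \<zeta> y) a - ip \<zeta> (mul a (star y))) - (ip (mul \<zeta> y) b - ip \<zeta> (mul b (star y))))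
        \<le> (hnorm ip (mul \<zeta> y) + hnorm ip \<zeta> * D) * hnorm ip (a - b)" .
  next
    fix z assume "z \<in> A0"
    then show "ip (mul \<zeta> y) z - ip \<zeta> (mul z (star y)) = 0" using step1 by blast
  qed
  then show ?thesis by simp
qed

lemma hnorm_diff_diff: "hnorm ip (u - v) \<le> hnorm ip u + hnorm ip v"
  using hnorm_triangle[of u "- v"] by (simp add: hnorm_neg)

lemma rassoc: assumes x: "x \<in> A0" and y: "y \<in> A0"
  shows "mul (mul \<zeta> x) y = mul \<zeta> (mul x y)"
proof -
  obtain C where C: "C \<ge> 0" "\<forall>a b. hnorm ip (mul a x - mul b x) \<le> C * hnorm ip (a - b)"
    using rmul_lip0[OF x] by blast
  obtain D where D: "D \<ge> 0" "\<forall>a b. hnorm ip (mul a y - mul b y) \<le> D * hnorm ip (a - b)"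
    using rmul_lip0[OF y] by blast
  obtain E where E: "E \<ge> 0" "\<forall>a b. hnorm ip (mul a (mul x y) - mul b (mul x y)) \<le> E * hnorm ip (a - b)"
    using rmul_lip0[OF A0_mul[OF x y]] by blast
  have "mul (mul \<zeta> x) y - mul \<zeta> (mul x y) = 0"
  proof (rule dense_zero_h[where G="\<lambda>\<zeta>. mul (mul \<zeta> x) y - mul \<zeta> (mul x y)"])
    fix a b
    have "(mul (mul a x) y - mul a (mul x y)) - (mul (mul b x) y - mul b (mul x y))
       = (mul (mul a x) y - mul (mul b x) y) - (mul a (mul x y) - mul b (mul x y))"
      by (simp add: algebra_simps)
    then have "hnorm ip ((mul (mul a x) y - mul a (mul x y)) - (mul (mul b x) y - mul b (mul x y)))
       \<le> hnorm ip (mul (mul a x) y - mul (mul b x) y) + hnorm ip (mul a (mul x y) - mul b (mul x y))"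
      using hnorm_diff_diff by metis
    also have "\<dots> \<le> D * hnorm ip (mul a x - mul b x) + E * hnorm ip (a - b)"
      using D E by (intro add_mono) auto
    also have "\<dots> \<le> D * (C * hnorm ip (a - b)) + E * hnorm ip (a - b)"
      using C D E by (intro add_mono mult_left_mono) auto
    also have "\<dots> = (D * C + E) * hnorm ip (a - b)" by (simp add: algebra_simps)
    finally show "hnorm ip ((mul (mul a x) y - mul a (mul x y)) - (mul (mul b x) y - mul b (mul x y)))
       \<le> (D * C + E) * hnorm ip (a - b)" .
  next
    fix z assume "z \<in> A0"
    then show "mul (mul z x) y - mul z (mul x y) = 0" using assoc[OF _ x y] by simp
  qed
  then show ?thesis by simp
qed

end

context hqa begin

lemma rmul_zero: "x \<in> A0 \<Longrightarrow> mul 0 x = 0"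
  using rmul_diff[of x 0 0] by simp

lemma cnonneg_ip_self: "cnonneg (ip u u)"
  using ip_self_Im[of u] ip_pos[of u] by (simp add: cnonneg_def)

lemma A0_plus_pos:
  assumes x: "x \<in> A0" and ys: "set ys \<subseteq> A0"
  shows "cnonneg (ip (mul (sum_list (map (\<lambda>y. mul (star y) y) ys)) x) x)"
  using ys
proof (induction ys)
  case Nil
  then show ?case by (simp add: rmul_zero[OF x] cnonneg_def)
next
  case (Cons y ys)
  then have y: "y \<in> A0" and ys: "set ys \<subseteq> A0" by auto
  have "ip (mul (mul (star y) y) x) x = ip (mul (star y) (mul y x)) x"
    using assoc[OF A0_star[OF y] y x] by simp
  also have "\<dots> = ip (mul y x) (mul (star (star y)) x)"
    using ladj[OF A0_star[OF y]] by simp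
  also have "\<dots> = ip (mul y x) (mul y x)" by (simp add: star_star)
  finally have t: "cnonneg (ip (mul (mul (star y) y) x) x)" using cnonneg_ip_self by simp
  show ?case
    using cnonneg_add[OF t Cons.IH[OF ys]] by (simp add: rmul_add[OF x] ip_add)
qed

lemma H_plus_sub_w: "H_plus ip star mul A0 \<subseteq> H_plus_w ip mul A0"
proof
  fix \<xi> assume \<xi>: "\<xi> \<in> H_plus ip star mul A0"
  show "\<xi> \<in> H_plus_w ip mul A0" unfolding H_plus_w_def
  proof (intro CollectI ballI)
    fix x assume x: "x \<in> A0"
    obtain C where C: "C \<ge> 0" "\<forall>a b. hnorm ip (mul a x - mul b x) \<le> C * hnorm ip (a - b)"
      using rmul_lip0[OF x] by blast
    show "cnonneg (ip (mul \<xi> x) x)"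
    proof (rule cnonneg_closed)
      fix e :: real assume e: "e > 0"
      define K where "K = C * hnorm ip x + 1"
      have K: "K > 0" using mult_nonneg_nonneg[OF C(1) hnorm_nonneg[of x]] unfolding K_def by linarith
      obtain a where a: "a \<in> A0_plus star mul A0" "hnorm ip (\<xi> - a) < e / K"
        using \<xi> divide_pos_pos[OF e K] unfolding H_plus_def by blast
      then obtain ys where ys: "a = sum_list (map (\<lambda>x. mul (star x) x) ys)" "set ys \<subseteq> A0"
        unfolding A0_plus_def by blast
      have pos: "cnonneg (ip (mul a x) x)" using A0_plus_pos[OF x ys(2)] ys(1) by simp
      have "cmod (ip (mul \<xi> x) x - ip (mul a x) x) = cmod (ip (mul \<xi> x - mul a x) x)"
        by (simp add: ip_diff)
      also have "\<dots> \<le> hnorm ip (mul \<xi> x - mul a x) * hnorm ip x" by (rule cauchy_schwarz)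
      also have "\<dots> \<le> (C * hnorm ip (\<xi> - a)) * hnorm ip x"
        using C by (intro mult_right_mono) auto
      also have "\<dots> = hnorm ip (\<xi> - a) * (C * hnorm ip x)" by simp
      also have "\<dots> \<le> hnorm ip (\<xi> - a) * K" unfolding K_def by (intro mult_left_mono) auto
      also have "\<dots> < (e / K) * K" using a(2) K by (intro mult_strict_right_mono) auto
      also have "\<dots> = e" using K by simp
      finally show "\<exists>z. cnonneg z \<and> cmod (ip (mul \<xi> x) x - z) < e" using pos by blast
    qed
  qed
qed

lemma term_pos:
  assumes \<xi>: "\<xi> \<in> H_plus_w ip mul A0" and x: "x \<in> A0" and y: "y \<in> A0"
  shows "cnonneg (ip (mul (star x) (mul \<xi> x)) (mul (star y) y))"
proof -
  have sy: "star y \<in> A0" using A0_star[OF y] .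
  have "ip (mul (star x) (mul \<xi> x)) (mul (star y) y) = ip (mul \<xi> x) (mul (star (star x)) (mul (star y) y))"
    using ladj[OF A0_star[OF x]] by simp
  also have "\<dots> = ip (mul \<xi> x) (mul (mul x (star y)) (star (star y)))"
    using assoc[OF x sy y] by (simp add: star_star)
  also have "\<dots> = ip (mul (mul \<xi> x) (star y)) (mul x (star y))"
    using radj[OF sy, of "mul \<xi> x" "mul x (star y)"] by simp
  also have "\<dots> = ip (mul \<xi> (mul x (star y))) (mul x (star y))"
    using rassoc[OF x sy] by simp
  finally show ?thesis using \<xi> A0_mul[OF x sy] unfolding H_plus_w_def by simp
qed

lemma sum_pos:
  assumes \<xi>: "\<xi> \<in> H_plus_w ip mul A0" and x: "x \<in> A0" and ys: "set ys \<subseteq> A0"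
  shows "cnonneg (ip (mul (star x) (mul \<xi> x)) (sum_list (map (\<lambda>y. mul (star y) y) ys)))"
  using ys
proof (induction ys)
  case Nil
  then show ?case by (simp add: cnonneg_def)
next
  case (Cons y ys)
  then show ?case using cnonneg_add[OF term_pos[OF \<xi> x, of y] Cons.IH] by (simp add: ip_add2)
qed

lemma pos_against_H_plus:
  assumes \<xi>: "\<xi> \<in> H_plus_w ip mul A0" and x: "x \<in> A0" and \<eta>: "\<eta> \<in> H_plus ip star mul A0"
  shows "cnonneg (ip (mul (star x) (mul \<xi> x)) \<eta>)"
proof (rule cnonneg_closed)
  fix e :: real assume e: "e > 0"
  define z where "z = mul (star x) (mul \<xi> x)"
  define K where "K = hnorm ip z + 1"
  have K: "K > 0" using hnorm_nonneg[of z] unfolding K_def by linarith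
  obtain a where a: "a \<in> A0_plus star mul A0" "hnorm ip (\<eta> - a) < e / K"
    using \<eta> divide_pos_pos[OF e K] unfolding H_plus_def by blast
  then obtain ys where ys: "a = sum_list (map (\<lambda>x. mul (star x) x) ys)" "set ys \<subseteq> A0"
    unfolding A0_plus_def by blast
  have pos: "cnonneg (ip z a)" using sum_pos[OF \<xi> x ys(2)] ys(1) z_def by simp
  have "cmod (ip z \<eta> - ip z a) = cmod (ip z (\<eta> - a))" by (simp add: ip_diff2)
  also have "\<dots> \<le> hnorm ip z * hnorm ip (\<eta> - a)" by (rule cauchy_schwarz)
  also have "\<dots> \<le> K * hnorm ip (\<eta> - a)" unfolding K_def by (intro mult_right_mono) auto
  also have "\<dots> < K * (e / K)" using a(2) K by (intro mult_strict_left_mono) auto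
  also have "\<dots> = e" using K by simp
  finally show "\<exists>w. cnonneg w \<and> cmod (ip (mul (star x) (mul \<xi> x)) \<eta> - w) < e"
    using pos z_def by blast
qed

end

context hqa begin

lemma parallelogram:
  "Re (ip (a - b) (a - b)) + Re (ip (a + b) (a + b)) = 2 * Re (ip a a) + 2 * Re (ip b b)"
  by (simp add: ip_add ip_add2 ip_diff ip_diff2)

lemma N_half: "Re (ip (smul (1/2) c) (smul (1/2) c)) = Re (ip c c) / 4"
  by (simp add: ip_smul ip_smul2)

lemma hnorm_lt_of_sq: "Re (ip a a) < e\<^sup>2 \<Longrightarrow> e > 0 \<Longrightarrow> hnorm ip a < e"
  unfolding hnorm_def by (metis real_sqrt_less_iff real_sqrt_pow2 abs_of_pos real_sqrt_abs)

lemma riesz: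
  fixes \<omega> :: "'h \<Rightarrow> complex"
  assumes add: "\<forall>a b. \<omega> (a + b) = \<omega> a + \<omega> b"
    and hom: "\<forall>c a. \<omega> (smul c a) = c * \<omega> a"
    and bd: "\<forall>\<xi>. cmod (\<omega> \<xi>) \<le> C * hnorm ip \<xi>"
  shows "\<exists>\<eta>. \<forall>\<zeta>. \<omega> \<zeta> = ip \<zeta> \<eta>"
proof (cases "\<forall>\<zeta>. \<omega> \<zeta> = 0")
  case True
  then show ?thesis by (intro exI[of _ 0]) simp
next
  case False
  then obtain \<zeta>0 where z0: "\<omega> \<zeta>0 \<noteq> 0" by blast
  have wdiff: "\<omega> (a - b) = \<omega> a - \<omega> b" for a b using additive_diff[OF add] .
  have w0: "\<omega> 0 = 0" using wdiff[of 0 0] by simp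
  define N where "N = (\<lambda>\<eta>. Re (ip \<eta> \<eta>))"
  define S where "S = {\<eta>. \<omega> \<eta> = 1}"
  define u where "u = smul (1 / \<omega> \<zeta>0) \<zeta>0"
  have uS: "u \<in> S" using z0 hom by (simp add: S_def u_def)
  define d where "d = Inf (N ` S)"
  have bdd: "bdd_below (N ` S)" unfolding N_def by (rule bdd_belowI[of _ 0]) (auto simp: ip_pos)
  have dle: "d \<le> N \<eta>" if "\<eta> \<in> S" for \<eta> unfolding d_def using bdd that by (simp add: cInf_lower)
  have d0: "d \<ge> 0" using uS unfolding d_def N_def
    by (intro cInf_greatest) (auto simp: ip_pos)
  have "\<exists>\<eta>\<in>S. N \<eta> < d + 1 / (real n + 1)" for n
  proof -
    have "Inf (N ` S) < d + 1 / (real n + 1)" unfolding d_def by simp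
    then show ?thesis using cInf_less_iff[of "N ` S"] bdd uS by auto
  qed
  then obtain X where XS: "\<And>n. X n \<in> S" and XN: "\<And>n. N (X n) < d + 1 / (real n + 1)"
    by metis
  have half: "smul (1/2) (a + b) \<in> S" if "a \<in> S" "b \<in> S" for a b
    using that hom add by (simp add: S_def)
  have sum_ge: "4 * d \<le> N (a + b)" if "a \<in> S" "b \<in> S" for a b
    using dle[OF half[OF that]] N_half[of "a + b"] unfolding N_def by simp
  have cd: "N (X m - X n) \<le> 2 / (real m + 1) + 2 / (real n + 1)" for m n
  proof -
    have "N (X m - X n) + N (X m + X n) = 2 * N (X m) + 2 * N (X n)"
      unfolding N_def by (rule parallelogram)
    then show ?thesis using sum_ge[OF XS XS, of m n] XN[of m] XN[of n] by simp
  qed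
  have cauchy: "\<forall>e>0. \<exists>M. \<forall>m\<ge>M. \<forall>n\<ge>M. hnorm ip (X m - X n) < e"
  proof (intro allI impI)
    fix e :: real assume e: "e > 0"
    obtain M :: nat where M: "4 / e\<^sup>2 < real M" using reals_Archimedean2 by blast
    have e2: "e\<^sup>2 > 0" using e by simp
    show "\<exists>M. \<forall>m\<ge>M. \<forall>n\<ge>M. hnorm ip (X m - X n) < e"
    proof (intro exI[of _ M] allI impI)
      fix m n assume mn: "M \<le> m" "M \<le> n"
      have "2 / (real m + 1) \<le> 2 / (real M + 1)" using mn by (intro divide_left_mono) auto
      moreover have "2 / (real n + 1) \<le> 2 / (real M + 1)" using mn by (intro divide_left_mono) auto
      moreover have "4 / (real M + 1) < e\<^sup>2"
      proof -
        have "4 < e\<^sup>2 * real M" using M e2 by (simp add: divide_less_eq mult.commute)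
        moreover have "e\<^sup>2 * (real M + 1) = e\<^sup>2 * real M + e\<^sup>2" by (simp add: distrib_left)
        ultimately have "4 < e\<^sup>2 * (real M + 1)" using e2 by linarith
        then show ?thesis by (simp add: divide_less_eq mult.commute)
      qed
      ultimately have "N (X m - X n) < e\<^sup>2" using cd[of m n] by simp
      then show "hnorm ip (X m - X n) < e" using e unfolding N_def by (rule hnorm_lt_of_sq)
    qed
  qed
  obtain L where L: "\<forall>e>0. \<exists>M. \<forall>n\<ge>M. hnorm ip (X n - L) < e"
    using complete[OF cauchy] by blast
  define C' where "C' = \<bar>C\<bar> + 1"
  have C': "C' > 0" "\<And>\<xi>. cmod (\<omega> \<xi>) \<le> C' * hnorm ip \<xi>"
  proof -
    show "C' > 0" by (simp add: C'_def add_pos_nonneg)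
    fix \<xi> have "C * hnorm ip \<xi> \<le> C' * hnorm ip \<xi>" unfolding C'_def by (intro mult_right_mono) auto
    then show "cmod (\<omega> \<xi>) \<le> C' * hnorm ip \<xi>" using bd by (meson order_trans)
  qed
  have LS: "\<omega> L = 1"
  proof -
    have "cmod (\<omega> L - 1) < e" if e: "e > 0" for e
    proof -
      obtain M where M: "\<forall>n\<ge>M. hnorm ip (X n - L) < e / C'" using L C' e by (meson divide_pos_pos)
      have "cmod (\<omega> L - 1) = cmod (\<omega> L - \<omega> (X M))" using XS[of M] by (simp add: S_def)
      also have "\<dots> = cmod (\<omega> (X M - L))" by (simp add: wdiff norm_minus_commute)
      also have "\<dots> \<le> C' * hnorm ip (X M - L)" by (rule C')
      also have "\<dots> < C' * (e / C')" using M C' by (intro mult_strict_left_mono) auto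
      also have "\<dots> = e" using C' by simp
      finally show ?thesis .
    qed
    then have "cmod (\<omega> L - 1) = 0"
      by (metis less_irrefl norm_ge_zero order_le_less)
    then show ?thesis by simp
  qed
  have NL: "N L \<le> d"
  proof -
    have "hnorm ip L \<le> sqrt d + e" if e: "e > 0" for e
    proof -
      obtain M1 where M1: "\<forall>n\<ge>M1. hnorm ip (X n - L) < e / 2" using L e by (meson half_gt_zero)
      obtain M2 :: nat where M2: "4 / e\<^sup>2 < real M2" using reals_Archimedean2 by blast
      define n where "n = max M1 M2"
      have e2: "e\<^sup>2 > 0" using e by simp
      have "1 / (real n + 1) < (e / 2)\<^sup>2"
      proof -
        have "real M2 \<le> real n" by (simp add: n_def)
        then have "4 / e\<^sup>2 < real n + 1" using M2 by simp
        then have "4 < e\<^sup>2 * (real n + 1)" using e2 by (simp add: divide_less_eq mult.commute)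
        then show ?thesis by (simp add: power_divide field_simps)
      qed
      then have s: "sqrt (1 / (real n + 1)) < e / 2"
        using e by (metis real_less_lsqrt zero_le_divide_iff of_nat_0_le_iff le_add_same_cancel2 zero_le_one
          half_gt_zero less_eq_real_def)
      have "hnorm ip (X n) = sqrt (N (X n))" by (simp add: hnorm_def N_def)
      also have "\<dots> \<le> sqrt (d + 1 / (real n + 1))" using XN[of n] by simp
      also have "\<dots> \<le> sqrt d + sqrt (1 / (real n + 1))" using d0 by (intro sqrt_add_le_add_sqrt) auto
      finally have a: "hnorm ip (X n) < sqrt d + e / 2" using s by simp
      have "hnorm ip L \<le> hnorm ip (X n) + hnorm ip (L - X n)"
        using hnorm_triangle[of "X n" "L - X n"] by simp
      also have "hnorm ip (L - X n) < e / 2" using M1 hnorm_commute[of L "X n"] by (simp add: n_def)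
      finally show ?thesis using a by simp
    qed
    then have "hnorm ip L \<le> sqrt d" by (rule field_le_epsilon)
    then have "(hnorm ip L)\<^sup>2 \<le> (sqrt d)\<^sup>2" by (intro power_mono) auto
    then show ?thesis using d0 by (simp add: hnorm_sq N_def)
  qed
  have LS': "L \<in> S" using LS by (simp add: S_def)
  have minimal: "N L \<le> N \<eta>" if "\<eta> \<in> S" for \<eta> using NL dle[OF that] by simp
  have orth: "ip k L = 0" if k: "\<omega> k = 0" for k
  proof -
    define a where "a = ip k L"
    have Lk: "ip L k = cnj a" unfolding a_def by (rule ip_sym)
    define s where "s = 1 / (N k + 1)"
    have Nk0: "N k \<ge> 0" by (simp add: N_def ip_pos)
    have s0: "s > 0" using Nk0 by (simp add: s_def)
    have sNk: "s * N k < 1" using Nk0 by (simp add: s_def)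
    define t where "t = - (complex_of_real s * cnj a)"
    have inS: "L + smul t k \<in> S" using LS k add hom by (simp add: S_def)
    have aa: "Re (cnj a * a) = (cmod a)\<^sup>2" using cmod_power2[of a] by (simp add: power2_eq_square)
    have "Re (ip (L + smul t k) (L + smul t k)) = N L - 2 * s * (cmod a)\<^sup>2 + s\<^sup>2 * (cmod a)\<^sup>2 * N k"
    proof -
      have "ip (L + smul t k) (L + smul t k) = ip L L + cnj t * cnj a + t * a + t * cnj t * ip k k"
        unfolding ip_expand Lk a_def ..
      also have "\<dots> = ip L L - 2 * complex_of_real s * (cnj a * a)
          + complex_of_real (s\<^sup>2) * (cnj a * a) * ip k k"
        unfolding t_def by (simp add: algebra_simps power2_eq_square)
      also have "\<dots> = complex_of_real (N L - 2 * s * (cmod a)\<^sup>2 + s\<^sup>2 * (cmod a)\<^sup>2 * N k)"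
      proof -
        have kk: "ip k k = complex_of_real (N k)" unfolding N_def by (rule ip_self_real)
        have LLr: "ip L L = complex_of_real (N L)" unfolding N_def by (rule ip_self_real)
        have ca: "cnj a * a = complex_of_real ((cmod a)\<^sup>2)"
          using complex_norm_square[of a] by (simp add: mult.commute)
        show ?thesis unfolding kk LLr ca by simp
      qed
      finally show ?thesis by simp
    qed
    with minimal[OF inS] have "2 * s * (cmod a)\<^sup>2 \<le> s\<^sup>2 * (cmod a)\<^sup>2 * N k"
      by (simp add: N_def)
    then have "2 * (cmod a)\<^sup>2 \<le> (s * N k) * (cmod a)\<^sup>2" using s0
      by (simp add: power2_eq_square algebra_simps)
    also have "\<dots> \<le> 1 * (cmod a)\<^sup>2" using sNk by (intro mult_right_mono) auto
    finally have "(cmod a)\<^sup>2 \<le> 0" by simp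
    then show ?thesis unfolding a_def by simp
  qed
  have L0: "L \<noteq> 0" using LS w0 by auto
  define n where "n = N L"
  have n0: "n > 0"
  proof -
    have "n \<ge> 0" by (simp add: n_def N_def ip_pos)
    moreover have "n \<noteq> 0"
    proof
      assume "n = 0"
      then have "ip L L = 0" using ip_self_real[of L] by (simp add: n_def N_def)
      then show False using L0 ip_zero by blast
    qed
    ultimately show ?thesis by simp
  qed
  have LL: "ip L L = complex_of_real n" unfolding n_def N_def by (rule ip_self_real)
  show ?thesis
  proof (intro exI[of _ "smul (1 / complex_of_real n) L"] allI)
    fix \<zeta>
    have "\<omega> (\<zeta> - smul (\<omega> \<zeta>) L) = 0" using wdiff hom LS by simp
    then have "ip (\<zeta> - smul (\<omega> \<zeta>) L) L = 0" by (rule orth)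
    then have "ip \<zeta> L = \<omega> \<zeta> * complex_of_real n" by (simp add: ip_diff ip_smul LL)
    then show "\<omega> \<zeta> = ip \<zeta> (smul (1 / complex_of_real n) L)" using n0 by (simp add: ip_smul2)
  qed
qed

end

context hqa begin

lemma metric_ok: "Metric_space UNIV (\<lambda>x y. hnorm ip (x - y))"
proof
  fix x y z :: 'h
  show "0 \<le> hnorm ip (x - y)" by simp
  show "hnorm ip (x - y) = hnorm ip (y - x)" by (rule hnorm_commute)
  show "(hnorm ip (x - y) = 0) = (x = y)" by (simp add: hnorm_zero_iff)
  show "hnorm ip (x - z) \<le> hnorm ip (x - y) + hnorm ip (y - z)" by (rule hnorm_triangle_diff)
qed

lemma ubp:
  fixes v :: "'h \<Rightarrow> 'h" and q :: "'h \<Rightarrow> real"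
  assumes q0: "\<And>u. q u \<ge> 0"
    and pw: "\<And>\<xi>. \<exists>\<gamma>. \<forall>u\<in>A0. cmod (ip \<xi> (v u)) \<le> \<gamma> * q u"
  shows "\<exists>c\<ge>0. \<forall>u\<in>A0. hnorm ip (v u) \<le> c * q u"
proof -
  interpret Ms: Metric_space UNIV "\<lambda>x y. hnorm ip (x - y)" by (rule metric_ok)
  have mc: Ms.mcomplete
    unfolding Ms.mcomplete_def Ms.MCauchy_def
  proof (intro allI impI)
    fix \<sigma> :: "nat \<Rightarrow> 'h"
    assume a: "range \<sigma> \<subseteq> UNIV \<and> (\<forall>\<epsilon>>0. \<exists>N. \<forall>n n'. N \<le> n \<longrightarrow> N \<le> n' \<longrightarrow> hnorm ip (\<sigma> n - \<sigma> n') < \<epsilon>)"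
    have "\<forall>e>0. \<exists>N. \<forall>m\<ge>N. \<forall>n\<ge>N. hnorm ip (\<sigma> m - \<sigma> n) < e"
    proof (intro allI impI)
      fix e :: real assume "e > 0"
      then obtain N where "\<forall>n n'. N \<le> n \<longrightarrow> N \<le> n' \<longrightarrow> hnorm ip (\<sigma> n - \<sigma> n') < e"
        using a by blast
      then show "\<exists>N. \<forall>m\<ge>N. \<forall>n\<ge>N. hnorm ip (\<sigma> m - \<sigma> n) < e" by blast
    qed
    then obtain L where L: "\<forall>e>0. \<exists>N. \<forall>n\<ge>N. hnorm ip (\<sigma> n - L) < e" using complete by blast
    have "limitin Ms.mtopology \<sigma> L sequentially"
      unfolding Ms.limitin_metric
    proof (intro conjI allI impI)
      show "L \<in> UNIV" by simp
      fix e :: real assume "e > 0"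
      then obtain N where N: "\<forall>n\<ge>N. hnorm ip (\<sigma> n - L) < e" using L by blast
      show "\<forall>\<^sub>F x in sequentially. \<sigma> x \<in> UNIV \<and> hnorm ip (\<sigma> x - L) < e"
        unfolding eventually_sequentially using N by blast
    qed
    then show "\<exists>x. limitin Ms.mtopology \<sigma> x sequentially" by blast
  qed
  define F where "F n = {\<xi>. \<forall>u\<in>A0. cmod (ip \<xi> (v u)) \<le> real n * q u}" for n :: nat
  have closed: "closedin Ms.mtopology (F n)" for n
    unfolding Ms.closedin_metric
  proof (intro conjI allI impI)
    show "F n \<subseteq> UNIV" by simp
    fix x assume "x \<in> UNIV - F n"
    then obtain u where u: "u \<in> A0" "cmod (ip x (v u)) > real n * q u" unfolding F_def by force
    define r where "r = (cmod (ip x (v u)) - real n * q u) / (hnorm ip (v u) + 1)"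
    have hp: "hnorm ip (v u) + 1 > 0" using hnorm_nonneg[of "v u"] by linarith
    have r: "r > 0" unfolding r_def using u hp by simp
    have "disjnt (F n) (Ms.mball x r)"
      unfolding disjnt_def
    proof (rule ccontr)
      assume "F n \<inter> Ms.mball x r \<noteq> {}"
      then obtain y where y: "y \<in> F n" "hnorm ip (x - y) < r" by auto
      have "cmod (ip x (v u)) - cmod (ip y (v u)) \<le> cmod (ip x (v u) - ip y (v u))"
        by (rule norm_triangle_ineq2)
      also have "\<dots> = cmod (ip (x - y) (v u))" by (simp add: ip_diff)
      also have "\<dots> \<le> hnorm ip (x - y) * hnorm ip (v u)" by (rule cauchy_schwarz)
      also have "\<dots> \<le> hnorm ip (x - y) * (hnorm ip (v u) + 1)" by (intro mult_left_mono) auto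
      also have "\<dots> < r * (hnorm ip (v u) + 1)" using y(2) hp by (intro mult_strict_right_mono) auto
      also have "\<dots> = cmod (ip x (v u)) - real n * q u" unfolding r_def using hp by simp
      finally have "real n * q u < cmod (ip y (v u))" by simp
      moreover have "cmod (ip y (v u)) \<le> real n * q u" using y(1) u(1) unfolding F_def by blast
      ultimately show False by simp
    qed
    then show "\<exists>r>0. disjnt (F n) (Ms.mball x r)" using r by blast
  qed
  have cover: "\<Union>(range F) = UNIV"
  proof -
    have "\<xi> \<in> \<Union>(range F)" for \<xi>
    proof -
      obtain \<gamma> where g: "\<forall>u\<in>A0. cmod (ip \<xi> (v u)) \<le> \<gamma> * q u" using pw by blast
      obtain n :: nat where n: "\<gamma> \<le> real n" using real_arch_simple by blast
      have "\<xi> \<in> F n" unfolding F_def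
      proof (intro CollectI ballI)
        fix u assume "u \<in> A0"
        then have "cmod (ip \<xi> (v u)) \<le> \<gamma> * q u" using g by blast
        also have "\<dots> \<le> real n * q u" using n q0[of u] by (intro mult_right_mono) auto
        finally show "cmod (ip \<xi> (v u)) \<le> real n * q u" .
      qed
      then show ?thesis by blast
    qed
    then show ?thesis by blast
  qed
  have "\<exists>n. Ms.mtopology interior_of (F n) \<noteq> {}"
  proof (rule ccontr)
    assume "\<not> ?thesis"
    then have "Ms.mtopology interior_of \<Union>(range F) = {}"
      using closed by (intro Ms.metric_Baire_category_alt[OF mc]) auto
    moreover have "Ms.mtopology interior_of UNIV = UNIV"
      using interior_of_topspace[of Ms.mtopology] by simp
    ultimately show False using cover by simp
  qed
  then obtain n \<xi>0 where x0: "\<xi>0 \<in> Ms.mtopology interior_of (F n)" by blast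
  then obtain r where r: "r > 0" "Ms.mball \<xi>0 r \<subseteq> Ms.mtopology interior_of (F n)"
    using openin_interior_of[of Ms.mtopology "F n"] unfolding Ms.openin_mtopology by blast
  have ball: "\<xi> \<in> F n" if "hnorm ip (\<xi>0 - \<xi>) < r" for \<xi>
    using r(2) that interior_of_subset[of Ms.mtopology "F n"] by auto
  have bound: "hnorm ip (v u) \<le> (4 * real n / r) * q u" if u: "u \<in> A0" for u
  proof (cases "v u = 0")
    case True
    then show ?thesis using q0[of u] r by simp
  next
    case False
    define h where "h = hnorm ip (v u)"
    have h: "h > 0" using False hnorm_zero_iff[of "v u"] hnorm_nonneg[of "v u"] unfolding h_def by linarith
    define \<zeta> where "\<zeta> = smul (complex_of_real (r / (2 * h))) (v u)"
    have c: "cmod (complex_of_real (r / (2 * h))) = r / (2 * h)"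
      using h r by (simp only: norm_of_real) simp
    have nz: "hnorm ip \<zeta> = r / 2" unfolding \<zeta>_def hnorm_smul h_def[symmetric] c using h r by simp
    have in1: "\<xi>0 + \<zeta> \<in> F n" by (rule ball) (use nz r hnorm_neg[of \<zeta>] in simp)
    have in0: "\<xi>0 \<in> F n" by (rule ball) (use r in simp)
    have "ip \<zeta> (v u) = complex_of_real (r / (2 * h)) * ip (v u) (v u)"
      unfolding \<zeta>_def by (rule ip_smul)
    also have "ip (v u) (v u) = complex_of_real (h\<^sup>2)"
      using ip_self_real[of "v u"] hnorm_sq[of "v u"] unfolding h_def by simp
    finally have e1: "ip \<zeta> (v u) = complex_of_real (r / (2 * h) * h\<^sup>2)" by (simp only: of_real_mult)
    have "r / (2 * h) * h\<^sup>2 = r * h / 2" using h by (simp add: power2_eq_square field_simps)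
    then have "cmod (ip \<zeta> (v u)) = r * h / 2" unfolding e1 using h r by (simp only: norm_of_real) simp
    moreover have "cmod (ip \<zeta> (v u)) \<le> 2 * real n * q u"
    proof -
      have "ip \<zeta> (v u) = ip (\<xi>0 + \<zeta>) (v u) - ip \<xi>0 (v u)" by (simp add: ip_add)
      then have "cmod (ip \<zeta> (v u)) \<le> cmod (ip (\<xi>0 + \<zeta>) (v u)) + cmod (ip \<xi>0 (v u))"
        by (metis norm_triangle_ineq4)
      also have "\<dots> \<le> real n * q u + real n * q u"
        using in1 in0 u unfolding F_def by (intro add_mono) blast+
      finally show ?thesis by simp
    qed
    ultimately have "r * h \<le> 4 * real n * q u" by simp
    then show ?thesis unfolding h_def[symmetric] using r by (simp add: field_simps)
  qed
  show ?thesis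
    by (rule exI[of _ "4 * real n / r"]) (use bound r in auto)
qed

end

context hqa begin

lemma Rc_rep:
  assumes \<omega>: "\<omega> \<in> Rc smul ip star mul A0"
  shows "\<exists>\<eta>\<in>H_plus_wb ip mul A0. \<forall>\<zeta>. \<omega> \<zeta> = ip \<zeta> \<eta>"
proof -
  have add: "\<forall>a b. \<omega> (a + b) = \<omega> a + \<omega> b" and hom: "\<forall>c a. \<omega> (smul c a) = c * \<omega> a"
    and L1: "\<forall>x\<in>A0. cnonneg (\<omega> (mul (star x) x))"
    and L3: "\<forall>\<xi>. \<exists>\<gamma>>0. \<forall>x\<in>A0. cmod (\<omega> (mul (star \<xi>) x)) \<le> \<gamma> * sqrt (Re (\<omega> (mul (star x) x)))"
    and bd: "\<exists>C. \<forall>\<xi>. cmod (\<omega> \<xi>) \<le> C * hnorm ip \<xi>"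
    using \<omega> unfolding Rc_def representable_def by blast+
  obtain C where C: "\<forall>\<xi>. cmod (\<omega> \<xi>) \<le> C * hnorm ip \<xi>" using bd by blast
  obtain \<eta> where \<eta>: "\<forall>\<zeta>. \<omega> \<zeta> = ip \<zeta> \<eta>" using riesz[OF add hom C] by blast
  have key: "\<omega> (mul u (star u)) = cnj (ip (mul \<eta> u) u)" if u: "u \<in> A0" for u
  proof -
    have "\<omega> (mul u (star u)) = ip (mul u (star u)) \<eta>" using \<eta> by simp
    also have "\<dots> = cnj (ip \<eta> (mul u (star u)))" by (rule ip_sym)
    also have "ip \<eta> (mul u (star u)) = ip (mul \<eta> u) u" using radj[OF u, of \<eta> u] by simp
    finally show ?thesis .
  qed
  have pos: "cnonneg (ip (mul \<eta> u) u)" if u: "u \<in> A0" for u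
  proof -
    have "cnonneg (\<omega> (mul (star (star u)) (star u)))" using L1 A0_star[OF u] by blast
    then have "cnonneg (\<omega> (mul u (star u)))" by (simp add: star_star)
    then show ?thesis using key[OF u] cnonneg_cnj by simp
  qed
  define q where "q u = sqrt (max 0 (Re (ip (mul \<eta> u) u)))" for u
  have q0: "q u \<ge> 0" for u unfolding q_def by simp
  have qA: "q u = sqrt (Re (ip (mul \<eta> u) u))" if u: "u \<in> A0" for u
    using pos[OF u] unfolding q_def cnonneg_def by simp
  have pw: "\<exists>\<gamma>. \<forall>u\<in>A0. cmod (ip \<xi> (mul \<eta> u)) \<le> \<gamma> * q u" for \<xi>
  proof -
    obtain \<gamma> where g: "\<forall>x\<in>A0. cmod (\<omega> (mul (star (star \<xi>)) x)) \<le> \<gamma> * sqrt (Re (\<omega> (mul (star x) x)))"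
      using L3 by blast
    have "cmod (ip \<xi> (mul \<eta> u)) \<le> \<gamma> * q u" if u: "u \<in> A0" for u
    proof -
      have su: "star u \<in> A0" using A0_star[OF u] .
      have "\<omega> (mul (star (star \<xi>)) (star u)) = ip (mul \<xi> (star u)) \<eta>" using \<eta> by (simp add: star_star)
      also have "\<dots> = ip \<xi> (mul \<eta> u)" using radj[OF su, of \<xi> \<eta>] by (simp add: star_star)
      finally have e1: "\<omega> (mul (star (star \<xi>)) (star u)) = ip \<xi> (mul \<eta> u)" .
      have "Re (\<omega> (mul (star (star u)) (star u))) = Re (ip (mul \<eta> u) u)"
        using key[OF u] by (simp add: star_star)
      then show ?thesis using g su e1 qA[OF u] by metis
    qed
    then show ?thesis by blast
  qed
  obtain c where c: "c \<ge> 0" "\<forall>u\<in>A0. hnorm ip (mul \<eta> u) \<le> c * q u"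
    using ubp[of q "mul \<eta>", OF q0 pw] by blast
  have bnd: "hnorm ip (mul \<eta> u) \<le> c\<^sup>2 * hnorm ip u" if u: "u \<in> A0" for u
  proof (cases "hnorm ip (mul \<eta> u) = 0")
    case True then show ?thesis using c by simp
  next
    case False
    define h where "h = hnorm ip (mul \<eta> u)"
    have h: "h > 0" using False hnorm_nonneg unfolding h_def by (metis order_le_less)
    have "(q u)\<^sup>2 = Re (ip (mul \<eta> u) u)" using qA[OF u] pos[OF u] by (simp add: cnonneg_def)
    also have "\<dots> \<le> cmod (ip (mul \<eta> u) u)" by (rule complex_Re_le_cmod)
    also have "\<dots> \<le> h * hnorm ip u" unfolding h_def by (rule cauchy_schwarz)
    finally have qq: "(q u)\<^sup>2 \<le> h * hnorm ip u" .
    have "h\<^sup>2 \<le> (c * q u)\<^sup>2" using c u h unfolding h_def by (intro power_mono) auto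
    also have "\<dots> = c\<^sup>2 * (q u)\<^sup>2" by (simp add: power_mult_distrib)
    also have "\<dots> \<le> c\<^sup>2 * (h * hnorm ip u)" using qq by (intro mult_left_mono) auto
    finally have "h * h \<le> h * (c\<^sup>2 * hnorm ip u)" by (simp add: power2_eq_square algebra_simps)
    then have "h \<le> c\<^sup>2 * hnorm ip u" using h by simp
    then show ?thesis unfolding h_def .
  qed
  have "\<eta> \<in> H_plus_wb ip mul A0"
    unfolding H_plus_wb_def bounded_elems_def using bnd pos by blast
  then show ?thesis using \<eta> by blast
qed

lemma main:
  assumes P: "condition_P smul ip star mul A0"
    and wb: "H_plus_wb ip mul A0 \<subseteq> H_plus ip star mul A0"
  shows "H_plus ip star mul A0 = H_plus_w ip mul A0"
proof
  show "H_plus ip star mul A0 \<subseteq> H_plus_w ip mul A0" by (rule H_plus_sub_w)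
  show "H_plus_w ip mul A0 \<subseteq> H_plus ip star mul A0"
  proof
    fix \<xi> assume \<xi>: "\<xi> \<in> H_plus_w ip mul A0"
    have "\<forall>\<omega>\<in>Rc smul ip star mul A0. \<forall>x\<in>A0. cnonneg (\<omega> (mul (star x) (mul \<xi> x)))"
    proof (intro ballI)
      fix \<omega> x assume \<omega>: "\<omega> \<in> Rc smul ip star mul A0" and x: "x \<in> A0"
      obtain \<eta> where \<eta>: "\<eta> \<in> H_plus_wb ip mul A0" "\<forall>\<zeta>. \<omega> \<zeta> = ip \<zeta> \<eta>"
        using Rc_rep[OF \<omega>] by blast
      have "\<eta> \<in> H_plus ip star mul A0" using \<eta>(1) wb by blast
      then have "cnonneg (ip (mul (star x) (mul \<xi> x)) \<eta>)" by (rule pos_against_H_plus[OF \<xi> x])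
      then show "cnonneg (\<omega> (mul (star x) (mul \<xi> x)))" using \<eta>(2) by simp
    qed
    then show "\<xi> \<in> H_plus ip star mul A0" using P unfolding condition_P_def by blast
  qed
qed

end

theorem mainTheorem14:
  fixes smul :: "complex \<Rightarrow> 'h::ab_group_add \<Rightarrow> 'h"
    and ip :: "'h \<Rightarrow> 'h \<Rightarrow> complex"
    and star :: "'h \<Rightarrow> 'h"
    and mul :: "'h \<Rightarrow> 'h \<Rightarrow> 'h"
    and A0 :: "'h set"
  assumes "hilbert_quasi_star_algebra smul ip star mul A0"
    and "condition_P smul ip star mul A0"
    and "H_plus_wb ip mul A0 \<subseteq> H_plus ip star mul A0"
  shows "H_plus ip star mul A0 = H_plus_w ip mul A0"
proof -
  interpret hqa smul ip star mul A0 by (rule hqa.intro) (rule assms(1))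
  show ?thesis using main assms(2,3) by blast
qed

end
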